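(* Let $\mathbf{s}$ be any composition (finite tuple of positive integers) of weight $w$ and let $p$ be an odd prime. Then $$-S(\mathbf{s}^\ast;p-1)\equiv S(\mathbf{s};p-1)+p\sum_{\mathbf{t}\preceq\mathbf{s}}H(\mathbf{t}\sqcup(1);p-1)\pmod{p^2}.$$
   Context: For $\mathbf{s}=(s_1,\dots,s_l)$ and $N\ge0$: $H(\mathbf{s};N)=\sum_{1\le k_1<\dots<k_l\le N}k_1^{-s_1}\cdots k_l^{-s_l}$, $S(\mathbf{s};N)=\sum_{1\le k_1\le\dots\le k_l\le N}k_1^{-s_1}\cdots k_l^{-s_l}$. The weight of $\mathbf{s}$ is $s_1+\dots+s_l$. For $\mathbf{s}=(i_1,\dots,i_k)$ of weight $w$, let $P(\mathbf{s})=\{i_1,i_1+i_2,\dots,i_1+\dots+i_{k-1}\}\subseteq\{1,\dots,w-1\}$; $P$ is a bijection from compositions of $w$ to subsets of $\{1,\dots,w-1\}$, and $\mathbf{s}^\ast$ is the composition of $w$ with $P(\mathbf{s}^\ast)=\{1,\dots,w-1\}\setminus P(\mathbf{s})$. $\mathbf{t}\preceq\mathbf{s}$ means $\mathbf{t}$ is obtained from $\mathbf{s}$ by combining (adding) some groups of consecutive parts (including $\mathbf{t}=\mathbf{s}$). $\mathbf{t}\sqcup(1)$ is the tuple $\mathbf{t}$ with an entry $1$ appended at the end. Congruences of rationals with denominators prime to $p$ are in the usual $p$-integral sense. *)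

theory Defs
  imports Complex_Main "HOL-Computational_Algebra.Primes"
begin

definition composition :: "nat list \<Rightarrow> bool" where
  "composition s \<longleftrightarrow> (\<forall>x\<in>set s. 0 < x)"

definition weight :: "nat list \<Rightarrow> nat" where
  "weight s = sum_list s"

definition Hsum :: "nat list \<Rightarrow> nat \<Rightarrow> rat" where
  "Hsum s N = (\<Sum>ks\<in>{ks. length ks = length s \<and> sorted_wrt (<) ks \<and> set ks \<subseteq> {1..N}}.
       \<Prod>i<length s. 1 / (of_nat (ks ! i)) ^ (s ! i))"

definition Ssum :: "nat list \<Rightarrow> nat \<Rightarrow> rat" where
  "Ssum s N = (\<Sum>ks\<in>{ks. length ks = length s \<and> sorted_wrt (\<le>) ks \<and> set ks \<subseteq> {1..N}}.
       \<Prod>i<length s. 1 / (of_nat (ks ! i)) ^ (s ! i))"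

definition Pset :: "nat list \<Rightarrow> nat set" where
  "Pset s = {sum_list (take j s) | j. 1 \<le> j \<and> j < length s}"

definition dual :: "nat list \<Rightarrow> nat list" where
  "dual s = (THE c. composition c \<and> weight c = weight s \<and>
                    Pset c = {1..weight s - 1} - Pset s)"

definition coarsening :: "nat list \<Rightarrow> nat list \<Rightarrow> bool" where
  "coarsening t s \<longleftrightarrow> (\<exists>gs. (\<forall>g\<in>set gs. g \<noteq> []) \<and> concat gs = s \<and> t = map sum_list gs)"

definition rat_cong :: "rat \<Rightarrow> rat \<Rightarrow> int \<Rightarrow> bool" where
  "rat_cong x y m \<longleftrightarrow> (\<exists>a b::int. b \<noteq> 0 \<and> coprime b m \<and> x - y = of_int m * of_int a / of_int b)"

end

theory Submission
  imports Defs
begin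


lemma Ssum_Nil: "Ssum [] N = 1"
proof -
  have "{ks::nat list. length ks = length ([]::nat list) \<and> sorted_wrt (\<le>) ks \<and> set ks \<subseteq> {1..N}} = {[]}" by auto
  then show ?thesis unfolding Ssum_def by simp
qed

lemma Hsum_Nil: "Hsum [] N = 1"
proof -
  have "{ks::nat list. length ks = length ([]::nat list) \<and> sorted_wrt (<) ks \<and> set ks \<subseteq> {1..N}} = {[]}" by auto
  then show ?thesis unfolding Hsum_def by simp
qed

lemma finite_K: "finite {ks::nat list. length ks = n \<and> R ks \<and> set ks \<subseteq> {1..N}}"
proof -
  have "finite {ks::nat list. set ks \<subseteq> {1..N} \<and> length ks = n}"
    by (rule finite_lists_length_eq) simp
  then show ?thesis by (rule rev_finite_subset) auto
qed

lemma prod_snoc: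
  assumes "length ks = length s"
  shows "(\<Prod>i<length (s@[a]). 1 / (of_nat ((ks@[m]) ! i)::rat) ^ ((s@[a]) ! i))
       = (\<Prod>i<length s. 1 / (of_nat (ks ! i)) ^ (s ! i)) / of_nat m ^ a"
proof -
  have "(\<Prod>i<length (s@[a]). 1 / (of_nat ((ks@[m]) ! i)::rat) ^ ((s@[a]) ! i))
     = (\<Prod>i<length s. 1 / (of_nat ((ks@[m]) ! i)::rat) ^ ((s@[a]) ! i)) * (1 / of_nat m ^ a)"
    using assms by (simp add: nth_append)
  also have "(\<Prod>i<length s. 1 / (of_nat ((ks@[m]) ! i)::rat) ^ ((s@[a]) ! i))
     = (\<Prod>i<length s. 1 / (of_nat (ks ! i)) ^ (s ! i))"
    using assms by (intro prod.cong) (auto simp: nth_append)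
  finally show ?thesis by simp
qed

lemma Ssum_snoc: "Ssum (s@[a]) N = (\<Sum>m=1..N. Ssum s m / of_nat m ^ a)"
proof -
  let ?K = "\<lambda>n N. {ks::nat list. length ks = n \<and> sorted_wrt (\<le>) ks \<and> set ks \<subseteq> {1..N}}"
  let ?F = "\<lambda>ks. (\<Prod>i<length (s@[a]). 1 / (of_nat (ks ! i)::rat) ^ ((s@[a]) ! i))"
  have eq: "?K (length (s@[a])) N = (\<lambda>(m,ks). ks@[m]) ` (SIGMA m:{1..N}. ?K (length s) m)"
  proof (rule set_eqI, rule iffI)
    fix x assume x: "x \<in> ?K (length (s@[a])) N"
    then have "x \<noteq> []" by auto
    then obtain ks m where xe: "x = ks@[m]" by (metis rev_exhaust)
    have mem: "(m, ks) \<in> (SIGMA m:{1..N}. ?K (length s) m)"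
      using x unfolding xe by (auto simp: sorted_wrt_append)
    show "x \<in> (\<lambda>(m,ks). ks@[m]) ` (SIGMA m:{1..N}. ?K (length s) m)"
      unfolding xe by (intro image_eqI[where x="(m,ks)"]) (use mem in auto)
  next
    fix x assume "x \<in> (\<lambda>(m,ks). ks@[m]) ` (SIGMA m:{1..N}. ?K (length s) m)"
    then show "x \<in> ?K (length (s@[a])) N"
      by (auto simp: sorted_wrt_append subset_iff)
  qed
  have inj: "inj_on (\<lambda>(m,ks). ks@[m]) (SIGMA m:{1..N}. ?K (length s) m)"
    by (auto simp: inj_on_def)
  have "Ssum (s@[a]) N = sum ?F (?K (length (s@[a])) N)" unfolding Ssum_def by simp
  also have "\<dots> = sum (?F \<circ> (\<lambda>(m,ks). ks@[m])) (SIGMA m:{1..N}. ?K (length s) m)"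
    unfolding eq by (rule sum.reindex[OF inj])
  also have "\<dots> = (\<Sum>(m,ks)\<in>(SIGMA m:{1..N}. ?K (length s) m). ?F (ks@[m]))"
    by (intro sum.cong) auto
  also have "\<dots> = (\<Sum>m\<in>{1..N}. \<Sum>ks\<in>?K (length s) m. ?F (ks@[m]))"
    by (rule sum.Sigma[symmetric]) (simp, intro ballI finite_K)
  also have "\<dots> = (\<Sum>m=1..N. Ssum s m / of_nat m ^ a)"
    unfolding Ssum_def sum_divide_distrib
    by (intro sum.cong refl) (rule prod_snoc; simp)
  finally show ?thesis .
qed

lemma Hsum_snoc: "Hsum (s@[a]) N = (\<Sum>m=1..N. Hsum s (m-1) / of_nat m ^ a)"
proof -
  let ?K = "\<lambda>n N. {ks::nat list. length ks = n \<and> sorted_wrt (<) ks \<and> set ks \<subseteq> {1..N}}"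
  let ?F = "\<lambda>ks. (\<Prod>i<length (s@[a]). 1 / (of_nat (ks ! i)::rat) ^ ((s@[a]) ! i))"
  have eq: "?K (length (s@[a])) N = (\<lambda>(m,ks). ks@[m]) ` (SIGMA m:{1..N}. ?K (length s) (m-1))"
  proof (rule set_eqI, rule iffI)
    fix x assume x: "x \<in> ?K (length (s@[a])) N"
    then have "x \<noteq> []" by auto
    then obtain ks m where xe: "x = ks@[m]" by (metis rev_exhaust)
    have mem: "(m, ks) \<in> (SIGMA m:{1..N}. ?K (length s) (m-1))"
      using x unfolding xe by (auto simp: sorted_wrt_append subset_iff)
    show "x \<in> (\<lambda>(m,ks). ks@[m]) ` (SIGMA m:{1..N}. ?K (length s) (m-1))"
      unfolding xe by (intro image_eqI[where x="(m,ks)"]) (use mem in auto)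
  next
    fix x assume "x \<in> (\<lambda>(m,ks). ks@[m]) ` (SIGMA m:{1..N}. ?K (length s) (m-1))"
    then show "x \<in> ?K (length (s@[a])) N"
      by (auto simp: sorted_wrt_append subset_iff; fastforce)
  qed
  have inj: "inj_on (\<lambda>(m,ks). ks@[m]) (SIGMA m:{1..N}. ?K (length s) (m-1))"
    by (auto simp: inj_on_def)
  have "Hsum (s@[a]) N = sum ?F (?K (length (s@[a])) N)" unfolding Hsum_def by simp
  also have "\<dots> = sum (?F \<circ> (\<lambda>(m,ks). ks@[m])) (SIGMA m:{1..N}. ?K (length s) (m-1))"
    unfolding eq by (rule sum.reindex[OF inj])
  also have "\<dots> = (\<Sum>(m,ks)\<in>(SIGMA m:{1..N}. ?K (length s) (m-1)). ?F (ks@[m]))"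
    by (intro sum.cong) auto
  also have "\<dots> = (\<Sum>m\<in>{1..N}. \<Sum>ks\<in>?K (length s) (m-1). ?F (ks@[m]))"
    by (rule sum.Sigma[symmetric]) (simp, intro ballI finite_K)
  also have "\<dots> = (\<Sum>m=1..N. Hsum s (m-1) / of_nat m ^ a)"
    unfolding Hsum_def sum_divide_distrib
    by (intro sum.cong refl) (rule prod_snoc; simp)
  finally show ?thesis .
qed



definition Bt :: "(nat \<Rightarrow> rat) \<Rightarrow> nat \<Rightarrow> rat" where
  "Bt g n = (\<Sum>i<n. (-1)^i * of_nat (n choose Suc i) * g (Suc i))"

lemma Bt_0[simp]: "Bt g 0 = 0" by (simp add: Bt_def)

lemma Bt_Suc: "Bt g (Suc n) = Bt g n + (\<Sum>i<Suc n. (-1)^i * of_nat (n choose i) * g (Suc i))"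
proof -
  have "Bt g (Suc n) = (\<Sum>i<Suc n. (-1)^i * of_nat (n choose Suc i) * g (Suc i))
      + (\<Sum>i<Suc n. (-1)^i * of_nat (n choose i) * g (Suc i))"
    unfolding Bt_def by (simp add: sum.distrib[symmetric] algebra_simps)
  also have "(\<Sum>i<Suc n. (-1)^i * of_nat (n choose Suc i) * g (Suc i)) = Bt g n"
    unfolding Bt_def by simp
  finally show ?thesis .
qed

lemma Bt_div: "Bt (\<lambda>m. g m / of_nat m) n = (\<Sum>k=1..n. Bt g k / of_nat k)"
proof (induction n)
  case 0
  then show ?case by simp
next
  case (Suc n)
  have t: "(-1)^i * of_nat (n choose i) * (g (Suc i) / of_nat (Suc i))
      = (-1)^i * of_nat (Suc n choose Suc i) * g (Suc i) / of_nat (Suc n)" for i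
  proof -
    have "of_nat (Suc n) * (of_nat (n choose i)::rat) = of_nat (Suc n choose Suc i) * of_nat (Suc i)"
      by (metis Suc_times_binomial_eq of_nat_mult)
    then have E: "(of_nat (n choose i)::rat) / of_nat (Suc i) = of_nat (Suc n choose Suc i) / of_nat (Suc n)"
      by (simp add: field_simps del: of_nat_Suc binomial_Suc_Suc)
    have "(-1)^i * of_nat (n choose i) * (g (Suc i) / of_nat (Suc i))
        = (-1)^i * g (Suc i) * ((of_nat (n choose i)::rat) / of_nat (Suc i))" by simp
    also have "\<dots> = (-1)^i * g (Suc i) * (of_nat (Suc n choose Suc i) / of_nat (Suc n))"
      by (simp only: E)
    finally show ?thesis by simp
  qed
  have "Bt (\<lambda>m. g m / of_nat m) (Suc n) = Bt (\<lambda>m. g m / of_nat m) n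
      + (\<Sum>i<Suc n. (-1)^i * of_nat (Suc n choose Suc i) * g (Suc i) / of_nat (Suc n))"
    by (subst Bt_Suc) (simp only: t)
  also have "(\<Sum>i<Suc n. (-1)^i * of_nat (Suc n choose Suc i) * g (Suc i) / of_nat (Suc n))
      = Bt g (Suc n) / of_nat (Suc n)"
    by (simp only: Bt_def sum_divide_distrib)
  finally show ?case using Suc by simp
qed

lemma alt_tail:
  assumes "j < Suc k"
  shows "(\<Sum>i\<in>{j..<Suc k}. (-1)^i * (of_nat (Suc k choose Suc i)::rat)) = (-1)^j * of_nat (k choose j)"
proof -
  define f where "f i = - ((-1)^i * (of_nat (k choose i)::rat))" for i
  have "(\<Sum>i\<in>{j..<Suc k}. (-1)^i * (of_nat (Suc k choose Suc i)::rat))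
      = (\<Sum>i\<in>{j..<Suc k}. f (Suc i) - f i)"
    by (intro sum.cong refl) (simp add: f_def algebra_simps)
  also have "\<dots> = f (Suc k) - f j"
    using assms by (intro sum_Suc_diff') simp
  finally show ?thesis by (simp add: f_def)
qed

lemma Bt_cumsum:
  "Bt (\<lambda>m. \<Sum>j=1..m. g j) (Suc k) = (\<Sum>i<Suc k. (-1)^i * of_nat (k choose i) * g (Suc i))"
proof -
  let ?c = "\<lambda>i. (-1)^i * (of_nat (Suc k choose Suc i)::rat)"
  have "Bt (\<lambda>m. \<Sum>j=1..m. g j) (Suc k) = (\<Sum>i<Suc k. ?c i * (\<Sum>j<Suc i. g (Suc j)))"
    unfolding Bt_def by (simp add: sum.atLeast1_atMost_eq del: binomial_Suc_Suc)
  also have "\<dots> = (\<Sum>i\<in>{..<Suc k}. \<Sum>j\<in>{j\<in>{..<Suc k}. j \<le> i}. ?c i * g (Suc j))"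
  proof (intro sum.cong refl)
    fix i assume "i \<in> {..<Suc k}"
    then have "{j\<in>{..<Suc k}. j \<le> i} = {..<Suc i}" by auto
    then show "?c i * (\<Sum>j<Suc i. g (Suc j)) = (\<Sum>j\<in>{j\<in>{..<Suc k}. j \<le> i}. ?c i * g (Suc j))"
      by (simp add: sum_distrib_left distrib_left del: binomial_Suc_Suc)
  qed
  also have "\<dots> = (\<Sum>j\<in>{..<Suc k}. \<Sum>i\<in>{i\<in>{..<Suc k}. j \<le> i}. ?c i * g (Suc j))"
    by (rule sum.swap_restrict) auto
  also have "\<dots> = (\<Sum>j<Suc k. (-1)^j * of_nat (k choose j) * g (Suc j))"
  proof (intro sum.cong refl)
    fix j assume j: "j \<in> {..<Suc k}"
    then have "{i\<in>{..<Suc k}. j \<le> i} = {j..<Suc k}" by auto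
    then have "(\<Sum>i\<in>{i\<in>{..<Suc k}. j \<le> i}. ?c i * g (Suc j)) = (\<Sum>i\<in>{j..<Suc k}. ?c i) * g (Suc j)"
      by (simp only: sum_distrib_right)
    also have "\<dots> = (-1)^j * of_nat (k choose j) * g (Suc j)"
      using j by (simp only: alt_tail lessThan_iff)
    finally show "(\<Sum>i\<in>{i\<in>{..<Suc k}. j \<le> i}. ?c i * g (Suc j)) = (-1)^j * of_nat (k choose j) * g (Suc j)" .
  qed
  finally show ?thesis .
qed

lemma Bt_cumsum': "Bt (\<lambda>m. \<Sum>j=1..m. g j) (Suc k) = Bt g (Suc k) - Bt g k"
  unfolding Bt_cumsum Bt_Suc[of g k] by simp

lemma Bt_one: "k \<ge> 1 \<Longrightarrow> Bt (\<lambda>_. 1) k = 1"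
proof -
  assume "k \<ge> 1"
  then obtain n where k: "k = Suc n" by (cases k) auto
  have "(\<Sum>i\<le>Suc n. (-1)^i * (of_nat (Suc n choose i)::rat)) = 0"
    by (rule choose_alternating_sum) simp
  then have "1 + (\<Sum>i\<le>n. (-1)^(Suc i) * (of_nat (Suc n choose Suc i)::rat)) = 0"
    by (simp only: sum.atMost_Suc_shift) (simp del: binomial_Suc_Suc)
  then have "(\<Sum>i\<le>n. (-1)^i * (of_nat (Suc n choose Suc i)::rat)) = 1"
    by (simp add: sum_negf del: binomial_Suc_Suc)
  then show ?thesis unfolding Bt_def k by (simp add: lessThan_Suc_atMost del: binomial_Suc_Suc)
qed



lemma Pset_image: "Pset s = (\<lambda>j. sum_list (take j s)) ` {1..<length s}"
  unfolding Pset_def by auto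

lemma Pset_snoc: "Pset (u@[b]) = (if u = [] then {} else insert (weight u) (Pset u))"
proof (cases "u = []")
  case True
  then show ?thesis by (simp add: Pset_def)
next
  case False
  have "Pset (u@[b]) = (\<lambda>j. sum_list (take j (u@[b]))) ` {1..<Suc (length u)}"
    by (simp add: Pset_image)
  also have "\<dots> = (\<lambda>j. sum_list (take j u)) ` {1..<Suc (length u)}"
    by (intro image_cong refl) simp
  also have "{1..<Suc (length u)} = insert (length u) {1..<length u}"
    using False by (cases u) auto
  also have "(\<lambda>j. sum_list (take j u)) ` insert (length u) {1..<length u} = insert (weight u) (Pset u)"
    by (simp add: Pset_image weight_def)
  finally show ?thesis using False by simp
qed

lemma composition_snoc: "composition (u@[b]) \<longleftrightarrow> composition u \<and> b > 0"
  by (auto simp: composition_def)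

lemma weight_snoc[simp]: "weight (u@[b]) = weight u + b"
  by (simp add: weight_def)

lemma weight_Nil[simp]: "weight [] = 0" by (simp add: weight_def)

lemma weight_pos: "composition c \<Longrightarrow> c \<noteq> [] \<Longrightarrow> weight c > 0"
  by (cases c rule: rev_exhaust) (auto simp: composition_snoc)

lemma Pset_sub: "composition c \<Longrightarrow> Pset c \<subseteq> {1..weight c - 1}"
proof (induction c rule: rev_induct)
  case Nil
  then show ?case by (simp add: Pset_def)
next
  case (snoc b u)
  then have cu: "composition u" and b: "b > 0" by (auto simp: composition_snoc)
  show ?case
  proof (cases "u = []")
    case True
    then show ?thesis by (simp add: Pset_def)
  next
    case False
    have "weight u > 0" using weight_pos[OF cu False] .
    moreover have "\<forall>x\<in>Pset u. 1 \<le> x \<and> x \<le> weight u - 1" using snoc.IH[OF cu] by auto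
    ultimately show ?thesis using b False by (auto simp: Pset_snoc)
  qed
qed

lemma Pset_unique:
  "composition c1 \<Longrightarrow> composition c2 \<Longrightarrow> weight c1 = weight c2 \<Longrightarrow> Pset c1 = Pset c2 \<Longrightarrow> c1 = c2"
proof (induction c1 arbitrary: c2 rule: rev_induct)
  case Nil
  then show ?case using weight_pos[of c2] by auto
next
  case (snoc a1 u1)
  have "c2 \<noteq> []" using snoc.prems weight_pos[of "u1@[a1]"] by auto
  then obtain u2 a2 where c2: "c2 = u2@[a2]" by (metis rev_exhaust)
  have cu1: "composition u1" and cu2: "composition u2"
    using snoc.prems c2 by (auto simp: composition_snoc)
  show ?case
  proof (cases "u1 = []")
    case True
    then have "Pset c2 = {}" using snoc.prems by (simp add: Pset_def)
    then have "u2 = []" unfolding c2 by (simp add: Pset_snoc split: if_splits)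
    then show ?thesis using True snoc.prems c2 by (simp add: weight_def)
  next
    case False
    then have "Pset c2 \<noteq> {}" using snoc.prems by (metis Pset_snoc insert_not_empty)
    then have u2: "u2 \<noteq> []" unfolding c2 by (simp add: Pset_snoc split: if_splits)
    have P1: "Pset u1 \<subseteq> {1..weight u1 - 1}" using Pset_sub[OF cu1] .
    have P2: "Pset u2 \<subseteq> {1..weight u2 - 1}" using Pset_sub[OF cu2] .
    have w1: "weight u1 > 0" using weight_pos[OF cu1 False] .
    have w2: "weight u2 > 0" using weight_pos[OF cu2 u2] .
    have E: "insert (weight u1) (Pset u1) = insert (weight u2) (Pset u2)"
      using snoc.prems(4) False u2 unfolding c2 by (simp add: Pset_snoc)
    have "weight u1 \<le> weight u2"
    proof -
      have "weight u1 \<in> insert (weight u2) (Pset u2)" using E by blast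
      then show ?thesis using P2 by (auto dest!: subsetD)
    qed
    moreover have "weight u2 \<le> weight u1"
    proof -
      have "weight u2 \<in> insert (weight u1) (Pset u1)" using E by blast
      then show ?thesis using P1 by (auto dest!: subsetD)
    qed
    ultimately have ww: "weight u1 = weight u2" by simp
    have "weight u1 \<notin> Pset u1" using P1 w1 by (auto dest!: subsetD)
    moreover have "weight u2 \<notin> Pset u2" using P2 w2 by (auto dest!: subsetD)
    ultimately have "Pset u1 = Pset u2" using E ww
      by (metis insert_ident)
    then have "u1 = u2" using snoc.IH[OF cu1 cu2 ww] by simp
    then show ?thesis using snoc.prems c2 by simp
  qed
qed

definition Ch :: "nat list \<Rightarrow> nat list \<Rightarrow> bool" where
  "Ch s c \<longleftrightarrow> composition c \<and> weight c = weight s \<and> Pset c = {1..weight s - 1} - Pset s"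

lemma dual_eq: "Ch s c \<Longrightarrow> dual s = c"
  unfolding dual_def
proof (rule the_equality)
  assume "Ch s c"
  then show "composition c \<and> weight c = weight s \<and> Pset c = {1..weight s - 1} - Pset s"
    by (simp add: Ch_def)
next
  fix c' assume "Ch s c" "composition c' \<and> weight c' = weight s \<and> Pset c' = {1..weight s - 1} - Pset s"
  then show "c' = c" using Pset_unique[of c' c] by (simp add: Ch_def)
qed

lemma Ch_one: "Ch [1] [1]"
  by (simp add: Ch_def composition_def weight_def Pset_def)

lemma Ch_up:
  assumes "composition (u@[b])" "Ch (u@[b]) d"
  shows "Ch (u@[Suc b]) (d@[1])"
proof -
  have cd: "composition d" and wd: "weight d = weight (u@[b])"
    and Pd: "Pset d = {1..weight (u@[b]) - 1} - Pset (u@[b])" using assms(2) by (auto simp: Ch_def)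
  have b: "b > 0" using assms(1) by (simp add: composition_snoc)
  have dne: "d \<noteq> []" using wd b by auto
  have sub: "Pset (u@[b]) \<subseteq> {1..weight (u@[b]) - 1}" using Pset_sub[OF assms(1)] .
  have PP: "Pset (u@[Suc b]) = Pset (u@[b])" by (simp add: Pset_snoc)
  have "Pset (d@[1]) = insert (weight d) (Pset d)" using dne by (simp add: Pset_snoc)
  also have "\<dots> = {1..weight (u@[Suc b]) - 1} - Pset (u@[Suc b])"
  proof -
    define W where "W = weight (u@[b])"
    have W1: "weight (u@[Suc b]) - 1 = W" unfolding W_def by simp
    have Wp: "W \<ge> 1" unfolding W_def using b by simp
    have sub': "\<forall>x\<in>Pset (u@[b]). x \<le> W - 1" using sub unfolding W_def by auto
    show ?thesis unfolding Pd wd PP W1 W_def[symmetric]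
      using sub' Wp by (auto simp del: weight_snoc)
  qed
  finally show ?thesis using cd wd by (simp add: Ch_def composition_snoc)
qed

lemma Ch_one_snoc:
  assumes "composition u" "u \<noteq> []" "Ch u (v@[c])"
  shows "Ch (u@[1]) (v@[Suc c])"
proof -
  have cd: "composition v" and wd: "weight (v@[c]) = weight u"
    and Pd: "Pset (v@[c]) = {1..weight u - 1} - Pset u" using assms(3) by (auto simp: Ch_def composition_snoc)
  have w: "weight u > 0" using weight_pos[OF assms(1,2)] .
  have PP: "Pset (v@[Suc c]) = Pset (v@[c])" by (simp add: Pset_snoc)
  have "Pset (u@[1]) = insert (weight u) (Pset u)" using assms(2) by (simp add: Pset_snoc)
  moreover have "weight (u@[1]) - 1 = weight u" by simp
  moreover have "{1..weight u} = insert (weight u) {1..weight u - 1}" using w by auto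
  ultimately have "{1..weight (u@[1]) - 1} - Pset (u@[1]) = {1..weight u - 1} - Pset u"
    using w by (simp only:) auto
  then show ?thesis using cd wd PP Pd by (simp add: Ch_def composition_snoc)
qed

lemma dual_Ch: "composition s \<Longrightarrow> s \<noteq> [] \<Longrightarrow> Ch s (dual s)"
proof (induction "weight s" arbitrary: s rule: less_induct)
  case less
  obtain u x where s: "s = u@[x]" using less.prems(2) by (metis rev_exhaust)
  have cu: "composition u" and x: "x > 0" using less.prems(1) s by (auto simp: composition_snoc)
  show ?case
  proof (cases "x = 1")
    case True
    show ?thesis
    proof (cases "u = []")
      case True
      then show ?thesis using \<open>x = 1\<close> s Ch_one dual_eq by simp
    next
      case False
      have "weight u < weight s" using s x by simp
      then have Cu: "Ch u (dual u)" using less.hyps cu False by blast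
      then have "dual u \<noteq> []" using weight_pos[OF cu False] by (auto simp: Ch_def)
      then obtain v c where v: "dual u = v@[c]" by (metis rev_exhaust)
      have "Ch s (v@[Suc c])" using Ch_one_snoc[OF cu False] Cu v s True by simp
      then show ?thesis using dual_eq by simp
    qed
  next
    case False
    then obtain b where b: "x = Suc b" "b > 0" using x by (cases x) auto
    have cb: "composition (u@[b])" using cu b by (simp add: composition_snoc)
    have "weight (u@[b]) < weight s" using s b by simp
    then have "Ch (u@[b]) (dual (u@[b]))" using less.hyps cb by fastforce
    then have "Ch s (dual (u@[b]) @ [1])" using Ch_up[OF cb] s b by simp
    then show ?thesis using dual_eq by simp
  qed
qed

lemma dual_one: "dual [1] = [1]"
  using Ch_one dual_eq by simp

lemma dual_up:
  assumes c: "composition (u@[b])"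
  shows "dual (u@[Suc b]) = dual (u@[b]) @ [1]"
proof -
  have "Ch (u@[b]) (dual (u@[b]))" using dual_Ch[OF c] by simp
  then show ?thesis by (intro dual_eq Ch_up c)
qed

lemma dual_one_snoc:
  assumes "composition u" "u \<noteq> []" "dual u = v@[c]"
  shows "dual (u@[1]) = v@[Suc c]"
proof -
  have "Ch u (v@[c])" using dual_Ch[OF assms(1,2)] unfolding assms(3) .
  then show ?thesis by (intro dual_eq Ch_one_snoc assms(1,2))
qed

lemma dual_ne: 
  assumes "composition s" "s \<noteq> []" shows "dual s \<noteq> []"
proof -
  have "Ch s (dual s)" using dual_Ch[OF assms] .
  then have "weight (dual s) = weight s" by (simp add: Ch_def)
  then show ?thesis using weight_pos[OF assms] by auto
qed



definition fS :: "nat list \<Rightarrow> nat \<Rightarrow> rat" where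
  "fS s m = Ssum (butlast s) m / of_nat m ^ last s"

lemma fS_snoc: "fS (u@[a]) m = Ssum u m / of_nat m ^ a"
  by (simp add: fS_def)

lemma Ssum_fS: "s \<noteq> [] \<Longrightarrow> Ssum s N = (\<Sum>m=1..N. fS s m)"
  by (cases s rule: rev_exhaust) (simp_all add: Ssum_snoc fS_snoc)

lemma Ssum_Suc_diff: "s \<noteq> [] \<Longrightarrow> Ssum s (Suc k) - Ssum s k = fS s (Suc k)"
  by (simp add: Ssum_fS)

lemma hoffman:
  "composition s \<Longrightarrow> s \<noteq> [] \<Longrightarrow> Ssum (dual s) n = Bt (fS s) n"
proof (induction "weight s" arbitrary: s n rule: less_induct)
  case less
  obtain u x where s: "s = u@[x]" using less.prems(2) by (metis rev_exhaust)
  have cu: "composition u" and x: "x > 0" using less.prems(1) s by (auto simp: composition_snoc)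
  show ?case
  proof (cases "x = 1")
    case True
    show ?thesis
    proof (cases "u = []")
      case True
      have ds: "dual s = [1]" using s True \<open>x = 1\<close> dual_one by simp
      have f: "fS s = (\<lambda>m. (\<lambda>_. 1) m / of_nat m)"
        using s True \<open>x = 1\<close> by (simp add: fS_def Ssum_Nil fun_eq_iff)
      have "Bt (fS s) n = (\<Sum>k=1..n. Bt (\<lambda>_. 1) k / of_nat k)"
        unfolding f by (rule Bt_div)
      also have "\<dots> = (\<Sum>k=1..n. 1 / of_nat k)"
        by (intro sum.cong refl) (simp add: Bt_one)
      also have "\<dots> = Ssum (dual s) n"
        unfolding ds using Ssum_snoc[of "[]" 1 n] by (simp add: Ssum_Nil)
      finally show ?thesis by simp
    next
      case False
      have "weight u < weight s" using s x by simp
      then have IH: "\<And>k. Ssum (dual u) k = Bt (fS u) k" using less.hyps cu False by blast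
      have "dual u \<noteq> []" using dual_ne[OF cu False] .
      then obtain v c where v: "dual u = v@[c]" by (metis rev_exhaust)
      have ds: "dual s = v@[Suc c]" using dual_one_snoc[OF cu False v] s True by simp
      have step: "Ssum v k / of_nat k ^ Suc c = Bt (Ssum u) k / of_nat k" if k: "k \<in> {1..n}" for k
      proof -
        obtain j where kj: "k = Suc j" using k by (cases k) auto
        have "Ssum v k / of_nat k ^ c = Ssum (v@[c]) (Suc j) - Ssum (v@[c]) j"
          using Ssum_Suc_diff[of "v@[c]" j] kj by (simp add: fS_snoc)
        also have "\<dots> = Bt (fS u) (Suc j) - Bt (fS u) j" using IH v by simp
        also have "\<dots> = Bt (\<lambda>m. \<Sum>j=1..m. fS u j) (Suc j)" by (rule Bt_cumsum'[symmetric])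
        also have "(\<lambda>m. \<Sum>j=1..m. fS u j) = Ssum u" using Ssum_fS[OF False] by (simp add: fun_eq_iff)
        finally have E: "Ssum v k / of_nat k ^ c = Bt (Ssum u) k" using kj by simp
        have "Ssum v k / of_nat k ^ Suc c = (Ssum v k / of_nat k ^ c) / of_nat k"
          by (simp add: divide_divide_eq_left mult.commute)
        then show ?thesis by (simp only: E)
      qed
      have "Ssum (dual s) n = (\<Sum>k=1..n. Ssum v k / of_nat k ^ Suc c)"
        unfolding ds by (rule Ssum_snoc)
      also have "\<dots> = (\<Sum>k=1..n. Bt (Ssum u) k / of_nat k)"
        by (intro sum.cong refl step)
      also have "\<dots> = Bt (\<lambda>m. Ssum u m / of_nat m) n" by (rule Bt_div[symmetric])
      also have "(\<lambda>m. Ssum u m / of_nat m) = fS s" using s True by (simp add: fS_snoc fun_eq_iff)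
      finally show ?thesis .
    qed
  next
    case False
    then obtain b where b: "x = Suc b" "b > 0" using x by (cases x) auto
    have cb: "composition (u@[b])" using cu b by (simp add: composition_snoc)
    have "weight (u@[b]) < weight s" using s b by simp
    then have IH: "\<And>k. Ssum (dual (u@[b])) k = Bt (fS (u@[b])) k" using less.hyps cb by fastforce
    have ds: "dual s = dual (u@[b]) @ [1]" using dual_up[OF cb] s b by simp
    have "Ssum (dual s) n = (\<Sum>k=1..n. Ssum (dual (u@[b])) k / of_nat k ^ 1)"
      unfolding ds by (rule Ssum_snoc)
    also have "\<dots> = (\<Sum>k=1..n. Bt (fS (u@[b])) k / of_nat k)" using IH by simp
    also have "\<dots> = Bt (\<lambda>m. fS (u@[b]) m / of_nat m) n" by (rule Bt_div[symmetric])
    also have "(\<lambda>m. fS (u@[b]) m / of_nat m) = fS s" using s b by (simp add: fS_snoc fun_eq_iff field_simps)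
    finally show ?thesis .
  qed
qed



definition incr :: "nat \<Rightarrow> nat list \<Rightarrow> nat list" where
  "incr a t = butlast t @ [last t + a]"

lemma coarsening_Nil: "coarsening t [] \<longleftrightarrow> t = []"
proof
  assume "coarsening t []"
  then obtain gs where "\<forall>g\<in>set gs. g \<noteq> []" "concat gs = []" "t = map sum_list gs"
    unfolding coarsening_def by blast
  then show "t = []" by (cases gs) auto
next
  assume "t = []"
  then show "coarsening t []" unfolding coarsening_def by (intro exI[of _ "[]"]) simp
qed

lemma coarsening_snoc_D:
  assumes "coarsening t (s@[a])"
  shows "(\<exists>t'. coarsening t' s \<and> t = t'@[a]) \<or> (\<exists>t'. coarsening t' s \<and> s \<noteq> [] \<and> t = incr a t')"
proof -
  obtain gs where ne: "\<forall>g\<in>set gs. g \<noteq> []" and c: "concat gs = s@[a]" and t: "t = map sum_list gs"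
    using assms unfolding coarsening_def by blast
  have "gs \<noteq> []" using c by auto
  then obtain gs' g where gs: "gs = gs'@[g]" by (metis rev_exhaust)
  have "g \<noteq> []" using ne gs by auto
  then obtain g' y where g: "g = g'@[y]" by (metis rev_exhaust)
  have "concat gs' @ g' @ [y] = s @ [a]" using c gs g by simp
  then have y: "y = a" and cs: "concat gs' @ g' = s" by auto
  show ?thesis
  proof (cases "g' = []")
    case True
    have "coarsening (map sum_list gs') s"
      unfolding coarsening_def using ne gs cs True by (intro exI[of _ gs']) auto
    moreover have "t = map sum_list gs' @ [a]" using t gs g y True by simp
    ultimately show ?thesis by blast
  next
    case False
    have "coarsening (map sum_list (gs'@[g'])) s"
      unfolding coarsening_def using ne gs cs False by (intro exI[of _ "gs'@[g']"]) auto
    moreover have "t = incr a (map sum_list (gs'@[g']))" using t gs g y by (simp add: incr_def)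
    moreover have "s \<noteq> []" using cs False by auto
    ultimately show ?thesis by blast
  qed
qed

lemma coarsening_snoc_I1: "coarsening t s \<Longrightarrow> coarsening (t@[a]) (s@[a])"
  unfolding coarsening_def
proof (elim exE conjE)
  fix gs assume "\<forall>g\<in>set gs. g \<noteq> []" "concat gs = s" "t = map sum_list gs"
  then show "\<exists>gs. (\<forall>g\<in>set gs. g \<noteq> []) \<and> concat gs = s @ [a] \<and> t @ [a] = map sum_list gs"
    by (intro exI[of _ "gs@[[a]]"]) auto
qed

lemma coarsening_snoc_I2: "coarsening t s \<Longrightarrow> s \<noteq> [] \<Longrightarrow> coarsening (incr a t) (s@[a])"
  unfolding coarsening_def
proof (elim exE conjE)
  fix gs assume ne: "\<forall>g\<in>set gs. g \<noteq> []" and c: "concat gs = s" and t: "t = map sum_list gs" and s: "s \<noteq> []"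
  have "gs \<noteq> []" using c s by auto
  then obtain hs h where gs: "gs = hs@[h]" by (metis rev_exhaust)
  show "\<exists>gs. (\<forall>g\<in>set gs. g \<noteq> []) \<and> concat gs = s @ [a] \<and> incr a t = map sum_list gs"
    using ne c t unfolding gs by (intro exI[of _ "hs@[h@[a]]"]) (auto simp: incr_def)
qed

lemma coarsening_composition:
  assumes "coarsening t s" "composition s"
  shows "composition t"
proof -
  obtain gs where ne: "\<forall>g\<in>set gs. g \<noteq> []" and c: "concat gs = s" and t: "t = map sum_list gs"
    using assms unfolding coarsening_def by blast
  have "sum_list g > 0" if "g \<in> set gs" for g
  proof -
    have "g \<noteq> []" using ne that by auto
    then obtain x where "x \<in> set g" by (cases g) auto
    moreover have "\<forall>y\<in>set g. y > 0" using assms(2) c that unfolding composition_def by auto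
    ultimately have "x > 0" "x \<le> sum_list g" by (auto simp: member_le_sum_list)
    then show ?thesis by simp
  qed
  then show ?thesis unfolding composition_def t by auto
qed

lemma coarsening_ne: "coarsening t s \<Longrightarrow> s \<noteq> [] \<Longrightarrow> t \<noteq> []"
  unfolding coarsening_def by auto

abbreviation CS :: "nat list \<Rightarrow> nat list set" where "CS s \<equiv> {t. coarsening t s}"

lemma CS_snoc:
  assumes "s \<noteq> []"
  shows "CS (s@[a]) = (\<lambda>t. t@[a]) ` CS s \<union> incr a ` CS s"
  using coarsening_snoc_D[of _ s a] coarsening_snoc_I1[of _ s a] coarsening_snoc_I2[of _ s a] assms
  by blast

lemma CS_single: "CS [a] = {[a]}"
proof -
  have "coarsening t ([]@[a]) \<longleftrightarrow> t = [a]" for t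
    using coarsening_snoc_D[of t "[]" a] coarsening_snoc_I1[of "[]" "[]" a]
    by (auto simp: coarsening_Nil)
  then show ?thesis by auto
qed

lemma CS_finite: "finite (CS s)"
proof (induction s rule: rev_induct)
  case Nil
  then show ?case by (simp add: coarsening_Nil)
next
  case (snoc a s)
  then show ?case by (cases "s = []") (simp_all add: CS_single CS_snoc)
qed

lemma Hsum_Suc: "Hsum (v@[b]) (Suc j) = Hsum (v@[b]) j + Hsum v j / of_nat (Suc j) ^ b"
  by (simp add: Hsum_snoc)

lemma Hsum_pair:
  assumes "t \<noteq> []"
  shows "Hsum (t@[a]) N + Hsum (incr a t) N = (\<Sum>m=1..N. Hsum t m / of_nat m ^ a)"
proof -
  obtain v b where t: "t = v@[b]" using assms by (metis rev_exhaust)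
  have "Hsum (t@[a]) N + Hsum (incr a t) N
      = (\<Sum>m=1..N. Hsum t (m-1) / of_nat m ^ a) + (\<Sum>m=1..N. Hsum v (m-1) / of_nat m ^ (b+a))"
  proof -
    have "incr a t = v@[b+a]" by (simp add: incr_def t)
    then show ?thesis using Hsum_snoc[of t a N] Hsum_snoc[of v "b+a" N] by simp
  qed
  also have "\<dots> = (\<Sum>m=1..N. Hsum t (m-1) / of_nat m ^ a + Hsum v (m-1) / of_nat m ^ (b+a))"
    by (simp add: sum.distrib)
  also have "\<dots> = (\<Sum>m=1..N. Hsum t m / of_nat m ^ a)"
  proof (intro sum.cong refl)
    fix m assume "m \<in> {1..N}"
    then obtain j where m: "m = Suc j" by (cases m) auto
    have "Hsum t m = Hsum t j + Hsum v j / of_nat m ^ b" unfolding t m by (rule Hsum_Suc)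
    then have "Hsum t m / of_nat m ^ a = Hsum t j / of_nat m ^ a + Hsum v j / (of_nat m ^ b * of_nat m ^ a)"
      by (simp add: add_divide_distrib divide_divide_eq_left)
    moreover have "(of_nat m::rat) ^ (b+a) = of_nat m ^ b * of_nat m ^ a" by (simp add: power_add)
    moreover have "m - 1 = j" using m by simp
    ultimately show "Hsum t (m-1) / of_nat m ^ a + Hsum v (m-1) / of_nat m ^ (b+a) = Hsum t m / of_nat m ^ a"
      by simp
  qed
  finally show ?thesis .
qed

lemma CS_sum:
  assumes "composition s"
  shows "(\<Sum>t\<in>CS s. Hsum t N) = Ssum s N"
  using assms
proof (induction s arbitrary: N rule: rev_induct)
  case Nil
  then show ?case by (simp add: coarsening_Nil Hsum_Nil Ssum_Nil)
next
  case (snoc a s)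
  have cs: "composition s" using snoc.prems by (simp add: composition_snoc)
  show ?case
  proof (cases "s = []")
    case True
    then show ?thesis using Hsum_snoc[of "[]" a N] Ssum_snoc[of "[]" a N]
      by (simp add: CS_single Hsum_Nil Ssum_Nil)
  next
    case False
    have inj1: "inj_on (\<lambda>t. t@[a]) (CS s)" by (auto simp: inj_on_def)
    have inj2: "inj_on (incr a) (CS s)"
    proof (rule inj_onI)
      fix x y assume x: "x \<in> CS s" and y: "y \<in> CS s" and e: "incr a x = incr a y"
      have "x \<noteq> []" "y \<noteq> []" using x y False coarsening_ne by auto
      moreover have "butlast x = butlast y" "last x = last y" using e by (auto simp: incr_def)
      ultimately show "x = y" by (metis append_butlast_last_id)
    qed
    have disj: "(\<lambda>t. t@[a]) ` CS s \<inter> incr a ` CS s = {}"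
    proof (rule ccontr)
      assume "(\<lambda>t. t@[a]) ` CS s \<inter> incr a ` CS s \<noteq> {}"
      then obtain x y where x: "x \<in> CS s" and y: "y \<in> CS s" and e: "x@[a] = incr a y" by auto
      have "y \<noteq> []" using y False coarsening_ne by auto
      moreover have "composition y" using y cs coarsening_composition by auto
      ultimately have "last y > 0" unfolding composition_def by auto
      moreover have "last (x@[a]) = last (incr a y)" using e by simp
      ultimately show False by (simp add: incr_def)
    qed
    have "(\<Sum>t\<in>CS (s@[a]). Hsum t N)
        = (\<Sum>t\<in>(\<lambda>t. t@[a]) ` CS s. Hsum t N) + (\<Sum>t\<in>incr a ` CS s. Hsum t N)"
      unfolding CS_snoc[OF False] by (rule sum.union_disjoint) (auto simp: CS_finite disj)
    also have "\<dots> = (\<Sum>t\<in>CS s. Hsum (t@[a]) N) + (\<Sum>t\<in>CS s. Hsum (incr a t) N)"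
      by (simp add: sum.reindex[OF inj1] sum.reindex[OF inj2])
    also have "\<dots> = (\<Sum>t\<in>CS s. \<Sum>m=1..N. Hsum t m / of_nat m ^ a)"
      unfolding sum.distrib[symmetric]
      by (intro sum.cong refl Hsum_pair) (use False coarsening_ne in auto)
    also have "\<dots> = (\<Sum>m=1..N. (\<Sum>t\<in>CS s. Hsum t m) / of_nat m ^ a)"
      by (subst sum.swap) (simp add: sum_divide_distrib)
    also have "\<dots> = Ssum (s@[a]) N"
      using snoc.IH[OF cs] by (simp add: Ssum_snoc)
    finally show ?thesis .
  qed
qed



definition PI :: "nat \<Rightarrow> rat set" where
  "PI p = {q. \<exists>a b::int. b \<noteq> 0 \<and> coprime b (int p) \<and> q = of_int a / of_int b}"

lemma PI_int: "of_int a \<in> PI p"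
  unfolding PI_def by (intro CollectI exI[of _ a] exI[of _ 1]) simp

lemma PI_0: "0 \<in> PI p" using PI_int[of 0] by simp
lemma PI_1: "1 \<in> PI p" using PI_int[of 1] by simp

lemma PI_add: "x \<in> PI p \<Longrightarrow> y \<in> PI p \<Longrightarrow> x + y \<in> PI p"
proof -
  assume "x \<in> PI p" "y \<in> PI p"
  then obtain a b c d :: int where "b \<noteq> 0" "coprime b (int p)" "x = of_int a / of_int b"
    "d \<noteq> 0" "coprime d (int p)" "y = of_int c / of_int d" unfolding PI_def by blast
  then show ?thesis unfolding PI_def
    by (intro CollectI exI[of _ "a*d + c*b"] exI[of _ "b*d"]) (simp add: field_simps)
qed

lemma PI_mult: "x \<in> PI p \<Longrightarrow> y \<in> PI p \<Longrightarrow> x * y \<in> PI p"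
proof -
  assume "x \<in> PI p" "y \<in> PI p"
  then obtain a b c d :: int where "b \<noteq> 0" "coprime b (int p)" "x = of_int a / of_int b"
    "d \<noteq> 0" "coprime d (int p)" "y = of_int c / of_int d" unfolding PI_def by blast
  then show ?thesis unfolding PI_def
    by (intro CollectI exI[of _ "a*c"] exI[of _ "b*d"]) (simp add: field_simps)
qed

lemma PI_uminus: "x \<in> PI p \<Longrightarrow> - x \<in> PI p"
  using PI_mult[OF PI_int[of "-1"]] by simp

lemma PI_diff: "x \<in> PI p \<Longrightarrow> y \<in> PI p \<Longrightarrow> x - y \<in> PI p"
  using PI_add[OF _ PI_uminus] by simp

lemma PI_sum: "(\<And>i. i \<in> A \<Longrightarrow> f i \<in> PI p) \<Longrightarrow> sum f A \<in> PI p"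
  by (induction A rule: infinite_finite_induct) (auto intro: PI_0 PI_add)

lemma PI_inv: "k \<noteq> 0 \<Longrightarrow> coprime k p \<Longrightarrow> 1 / of_nat k \<in> PI p"
  unfolding PI_def by (intro CollectI exI[of _ 1] exI[of _ "int k"]) simp

lemma PI_pow: "x \<in> PI p \<Longrightarrow> x ^ n \<in> PI p"
  by (induction n) (auto intro: PI_1 PI_mult)

lemma cop: "prime (p::nat) \<Longrightarrow> 0 < j \<Longrightarrow> j < p \<Longrightarrow> coprime j p"
  using prime_imp_coprime[of p j] nat_dvd_not_less[of j p] by (simp add: coprime_commute)

lemma PI_divpow: "x \<in> PI p \<Longrightarrow> prime p \<Longrightarrow> 0 < j \<Longrightarrow> j < p \<Longrightarrow> x / of_nat j ^ e \<in> PI p"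
proof -
  assume "x \<in> PI p" "prime p" "0 < j" "j < p"
  moreover have "1 / of_nat j \<in> PI p" using PI_inv cop calculation by auto
  ultimately have "x * (1 / of_nat j) ^ e \<in> PI p" by (intro PI_mult PI_pow)
  then show ?thesis by (simp add: power_one_over)
qed

lemma Ssum_PI: "prime p \<Longrightarrow> m < p \<Longrightarrow> Ssum s m \<in> PI p"
proof (induction s arbitrary: m rule: rev_induct)
  case Nil
  then show ?case by (simp add: Ssum_Nil PI_1)
next
  case (snoc a s)
  show ?case unfolding Ssum_snoc
    by (rule PI_sum, rule PI_divpow) (use snoc in auto)
qed

lemma fS_PI: "prime p \<Longrightarrow> 0 < m \<Longrightarrow> m < p \<Longrightarrow> fS s m \<in> PI p"
  unfolding fS_def by (intro PI_divpow Ssum_PI) auto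

definition Hn :: "nat \<Rightarrow> rat" where "Hn m = (\<Sum>j=1..m. 1 / of_nat j)"

lemma prod_exp:
  assumes "prime p" "m < p"
  shows "\<exists>E\<in>PI p. (\<Prod>j=1..m. 1 - of_nat p / of_nat j) = 1 - of_nat p * Hn m + (of_nat p)^2 * E"
  using assms(2)
proof (induction m)
  case 0
  then show ?case by (intro bexI[of _ 0] PI_0) (simp add: Hn_def)
next
  case (Suc m)
  then obtain E where E: "E \<in> PI p" "(\<Prod>j=1..m. 1 - of_nat p / of_nat j) = 1 - of_nat p * Hn m + (of_nat p)^2 * E"
    by auto
  define q where "q = 1 / (of_nat (Suc m) :: rat)"
  have q: "q \<in> PI p" unfolding q_def using Suc.prems assms(1) cop by (intro PI_inv) auto
  define E' where "E' = Hn m * q + E - of_nat p * E * q"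
  have "Hn m \<in> PI p" unfolding Hn_def using Suc.prems
    by (intro PI_sum PI_inv) (auto intro!: cop[OF assms(1)])
  then have E': "E' \<in> PI p" unfolding E'_def using E(1) q
    by (intro PI_add PI_diff PI_mult PI_int[of "int p", simplified])
  have "(\<Prod>j=1..Suc m. 1 - of_nat p / of_nat j) = (1 - of_nat p * Hn m + (of_nat p)^2 * E) * (1 - of_nat p * q)"
    by (simp only: prod.cl_ivl_Suc E(2) q_def) simp
  also have "\<dots> = 1 - of_nat p * Hn (Suc m) + (of_nat p)^2 * E'"
    by (simp add: Hn_def q_def E'_def algebra_simps power2_eq_square del: of_nat_Suc)
  finally show ?case using E' by blast
qed

lemma aux_bp: "(y::rat) + 1 \<noteq> 0 \<Longrightarrow> c' = c * (x - 1 - y) / (y + 1) \<Longrightarrow>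
  (-1)^(Suc m) * c' = ((-1)^m * c) * (1 - x / (y + 1))"
proof -
  assume A: "(y::rat) + 1 \<noteq> 0" and B: "c' = c * (x - 1 - y) / (y + 1)"
  show ?thesis using A by (simp add: B field_simps)
qed

lemma binom_prod:
  "(-1)^m * (of_nat ((n - 1) choose m) :: rat) = (\<Prod>j=1..m. 1 - of_nat n / of_nat j)" if "n \<ge> 1"
proof (induction m)
  case 0
  then show ?case by simp
next
  case (Suc m)
  have key: "Suc m * ((n-1) choose Suc m) = (n - 1 - m) * ((n-1) choose m)"
    using binomial_absorption[of m "n-1"] binomial_absorb_comp[of "n-1" m] by simp
  show ?case
  proof (cases "m < n")
    case True
    have "(of_nat ((n - 1) choose Suc m) :: rat) = of_nat ((n-1) choose m) * (of_nat n - 1 - of_nat m) / of_nat (Suc m)"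
    proof -
      have "(of_nat (Suc m) :: rat) * of_nat ((n-1) choose Suc m) = of_nat (n - 1 - m) * of_nat ((n-1) choose m)"
        using key by (metis of_nat_mult)
      moreover have "(of_nat (n - 1 - m) :: rat) = of_nat n - 1 - of_nat m" using True that by (simp add: of_nat_diff)
      moreover have "\<And>w x y z :: rat. w \<noteq> 0 \<Longrightarrow> w * x = z * y \<Longrightarrow> x = y * z / w"
        by (simp add: field_simps)
      ultimately show ?thesis by (metis of_nat_0_eq_iff nat.distinct(1))
    qed
    then have "(-1)^Suc m * (of_nat ((n - 1) choose Suc m) :: rat)
        = ((-1)^m * of_nat ((n - 1) choose m)) * (1 - of_nat n / (of_nat m + 1))"
      by (intro aux_bp) (simp_all add: add.commute)
    then show ?thesis using Suc.IH by (simp del: of_nat_Suc)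
  next
    case False
    then have z1: "(n - 1) choose m = 0" and z2: "(n - 1) choose Suc m = 0" using that by auto
    have "(\<Prod>j=1..Suc m. 1 - (of_nat n::rat) / of_nat j) = (\<Prod>j=1..m. 1 - of_nat n / of_nat j) * (1 - of_nat n / of_nat (Suc m))"
      by (simp only: prod.cl_ivl_Suc) simp
    then show ?thesis by (simp only: Suc.IH[symmetric] z1 z2)
  qed
qed



lemma abel:
  assumes "s \<noteq> []"
  shows "(\<Sum>m=1..N. Hn m * fS s m) + (\<Sum>m=1..N. Ssum s (m-1) / of_nat m) = Hn N * Ssum s N"
proof (induction N)
  case 0
  then show ?case by (simp add: Hn_def Ssum_fS[OF assms])
next
  case (Suc N)
  have H: "Hn (Suc N) = Hn N + 1 / of_nat (Suc N)" by (simp add: Hn_def)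
  have S: "Ssum s (Suc N) = Ssum s N + fS s (Suc N)" using Ssum_Suc_diff[OF assms, of N] by simp
  have "(\<Sum>m=1..Suc N. Hn m * fS s m) + (\<Sum>m=1..Suc N. Ssum s (m-1) / of_nat m)
     = ((\<Sum>m=1..N. Hn m * fS s m) + (\<Sum>m=1..N. Ssum s (m-1) / of_nat m))
       + Hn (Suc N) * fS s (Suc N) + Ssum s N / of_nat (Suc N)"
    by (simp del: of_nat_Suc)
  also have "\<dots> = Hn (Suc N) * Ssum s (Suc N)"
    unfolding Suc.IH H S by (simp add: algebra_simps)
  finally show ?case .
qed

lemma CS_H1:
  assumes "composition s"
  shows "(\<Sum>t\<in>{t. coarsening t s}. Hsum (t @ [1]) N) = (\<Sum>m=1..N. Ssum s (m-1) / of_nat m)"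
proof -
  have "(\<Sum>t\<in>{t. coarsening t s}. Hsum (t @ [1]) N) = (\<Sum>t\<in>CS s. \<Sum>m=1..N. Hsum t (m-1) / of_nat m)"
    by (simp add: Hsum_snoc)
  also have "\<dots> = (\<Sum>m=1..N. (\<Sum>t\<in>CS s. Hsum t (m-1)) / of_nat m)"
    by (subst sum.swap) (simp add: sum_divide_distrib)
  also have "\<dots> = (\<Sum>m=1..N. Ssum s (m-1) / of_nat m)"
    using CS_sum[OF assms] by simp
  finally show ?thesis .
qed

lemma harm:
  assumes p: "prime p" "odd p"
  shows "\<exists>Q\<in>PI p. Hn (p - 1) = of_nat p * Q"
proof -
  have p2: "p \<ge> 2" using prime_ge_2_nat p by blast
  define Q :: rat where "Q = (\<Sum>j=1..p-1. (1 / of_nat j) * (1 / of_nat (p - j))) * (1 / of_nat 2)"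
  have c2: "coprime (2::nat) p" using prime_imp_coprime[of 2 p] p by simp
  have "Q \<in> PI p" unfolding Q_def
  proof (intro PI_mult PI_sum PI_inv)
    show "coprime (2::nat) p" by (rule c2)
  qed (use p p2 cop in auto)
  moreover have "Hn (p - 1) = of_nat p * Q"
  proof -
    have rev: "(\<Sum>j=1..p-1. 1 / (of_nat j::rat)) = (\<Sum>j=1..p-1. 1 / of_nat (p - j))"
      using sum.atLeastAtMost_rev[of "\<lambda>j. 1 / (of_nat j::rat)" 1 "p-1"] p2 by simp
    have pair: "1 / (of_nat j::rat) + 1 / of_nat (p - j) = of_nat p * ((1 / of_nat j) * (1 / of_nat (p - j)))"
      if "j \<in> {1..p-1}" for j
    proof -
      have "(of_nat (p - j)::rat) = of_nat p - of_nat j" using that by (intro of_nat_diff) auto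
      moreover have "(of_nat j::rat) \<noteq> 0" "(of_nat p::rat) - of_nat j \<noteq> 0" using that by auto
      ultimately show ?thesis by (simp add: field_simps)
    qed
    have "2 * Hn (p - 1) = (\<Sum>j=1..p-1. 1 / (of_nat j::rat)) + (\<Sum>j=1..p-1. 1 / of_nat (p - j))"
      unfolding Hn_def rev[symmetric] by simp
    also have "\<dots> = (\<Sum>j=1..p-1. of_nat p * ((1 / of_nat j) * (1 / of_nat (p - j))))"
      unfolding sum.distrib[symmetric] by (intro sum.cong refl pair)
    also have "\<dots> = 2 * (of_nat p * Q)" unfolding Q_def sum_distrib_left[symmetric] by simp
    finally show ?thesis by simp
  qed
  ultimately show ?thesis by blast
qed



theorem theorem2p11:
  fixes s :: "nat list" and p :: nat
  assumes "composition s" and "s \<noteq> []"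
    and "prime p" and "odd p"
  shows "rat_cong (- Ssum (dual s) (p - 1))
           (Ssum s (p - 1) + of_nat p * (\<Sum>t\<in>{t. coarsening t s}. Hsum (t @ [1]) (p - 1)))
           (int p ^ 2)"
proof -
  have p2: "p \<ge> 2" using prime_ge_2_nat assms(3) by blast
  define N where "N = p - 1"
  define f where "f = fS s"
  define P :: rat where "P = of_nat p"
  have "\<forall>m. \<exists>E. m < p \<longrightarrow> E \<in> PI p \<and> (\<Prod>j=1..m. 1 - of_nat p / of_nat j) = 1 - of_nat p * Hn m + (of_nat p)^2 * E"
    using prod_exp[OF assms(3)] by blast
  then obtain E where E: "\<And>m. m < p \<Longrightarrow> E m \<in> PI p \<and> (\<Prod>j=1..m. 1 - of_nat p / of_nat j) = 1 - of_nat p * Hn m + (of_nat p)^2 * E m"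
    by metis
  have coef: "(-1)^i * (of_nat (N choose Suc i) :: rat) = - (1 - P * Hn (Suc i) + P^2 * E (Suc i))"
    if "i < N" for i
  proof -
    have "(-1)^(Suc i) * (of_nat ((p - 1) choose Suc i) :: rat) = (\<Prod>j=1..Suc i. 1 - of_nat p / of_nat j)"
      using binom_prod[of p "Suc i"] p2 by simp
    also have "\<dots> = 1 - P * Hn (Suc i) + P^2 * E (Suc i)"
      using E[of "Suc i"] that unfolding N_def P_def by simp
    finally show ?thesis unfolding N_def by simp
  qed
  have "Ssum (dual s) N = Bt f N" unfolding f_def by (rule hoffman[OF assms(1,2)])
  also have "\<dots> = (\<Sum>i<N. - (1 - P * Hn (Suc i) + P^2 * E (Suc i)) * f (Suc i))"
    unfolding Bt_def by (intro sum.cong refl) (simp add: coef)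
  also have "\<dots> = - (\<Sum>m=1..N. (1 - P * Hn m + P^2 * E m) * f m)"
    by (subst sum_negf[symmetric]) (simp add: sum.atLeast1_atMost_eq algebra_simps)
  finally have dS: "- Ssum (dual s) N = (\<Sum>m=1..N. f m) - P * (\<Sum>m=1..N. Hn m * f m) + P^2 * (\<Sum>m=1..N. E m * f m)"
    by (simp add: algebra_simps sum.distrib sum_subtractf sum_distrib_left)
  have Sf: "(\<Sum>m=1..N. f m) = Ssum s N" unfolding f_def by (rule Ssum_fS[OF assms(2), symmetric])
  define R where "R = (\<Sum>m=1..N. Ssum s (m-1) / of_nat m)"
  have CR: "(\<Sum>t\<in>{t. coarsening t s}. Hsum (t @ [1]) N) = R"
    unfolding R_def by (rule CS_H1[OF assms(1)])
  have ab: "(\<Sum>m=1..N. Hn m * f m) + R = Hn N * Ssum s N"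
    unfolding f_def R_def by (rule abel[OF assms(2)])
  obtain Q where Q: "Q \<in> PI p" "Hn N = P * Q" using harm[OF assms(3,4)] unfolding N_def P_def by blast
  define Z where "Z = (\<Sum>m=1..N. E m * f m) - Q * Ssum s N"
  have diff: "- Ssum (dual s) N - (Ssum s N + P * R) = P^2 * Z"
  proof -
    have "- Ssum (dual s) N - (Ssum s N + P * R) = - P * ((\<Sum>m=1..N. Hn m * f m) + R) + P^2 * (\<Sum>m=1..N. E m * f m)"
      unfolding dS Sf by (simp add: algebra_simps)
    also have "\<dots> = P^2 * Z" unfolding ab Q(2) Z_def by (simp add: algebra_simps power2_eq_square)
    finally show ?thesis .
  qed
  have "Z \<in> PI p" unfolding Z_def
  proof (intro PI_diff PI_mult PI_sum Q(1) Ssum_PI assms(3))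
    fix m assume m: "m \<in> {1..N}"
    then show "E m \<in> PI p" using E[of m] unfolding N_def by auto
    show "f m \<in> PI p" unfolding f_def using m assms(3) unfolding N_def by (intro fS_PI) auto
  qed (use p2 N_def in auto)
  then obtain a b :: int where ab': "b \<noteq> 0" "coprime b (int p)" "Z = of_int a / of_int b"
    unfolding PI_def by blast
  show ?thesis unfolding rat_cong_def
  proof (intro exI conjI)
    show "b \<noteq> 0" by (rule ab'(1))
    show "coprime b (int p ^ 2)" using ab'(2) by simp
    show "- Ssum (dual s) (p - 1) - (Ssum s (p - 1) + of_nat p * (\<Sum>t\<in>{t. coarsening t s}. Hsum (t @ [1]) (p - 1)))
        = of_int (int p ^ 2) * of_int a / of_int b"
      using diff CR ab'(3) unfolding N_def P_def by simp
  qed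
qed

end
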